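(* Let $e,c,h\in\omega^\omega$ with $e$ nondecreasing and unbounded and $c(n)\ge1$ for all $n$. Let $\langle I_n:n\in\omega\rangle$ be the partition of $\omega$ into consecutive intervals with $|I_n|=h(n)$, and define $g_{c,h}\in\omega^\omega$ by $g_{c,h}(k)=\lfloor\log_2c(n)\rfloor$ whenever $k\in I_n$. Suppose $e(g_{c,h}(n))\ge2\log_2n$ for all $n\ge1$. Then $\mathfrak{v}^\exists_{c,h}\le\operatorname{non}(\mathcal{N}^{e^*})$ and $\operatorname{cov}(\mathcal{N}^{e^*})\le\mathfrak{c}^\exists_{c,h}$.
   Context: $2^\omega$ carries the metric $d(x,y)=2^{-\min\{n:x(n)\neq y(n)\}}$ for $x\neq y$ and $d(x,x)=0$. A gauge function is a nondecreasing $f\colon[0,\infty)\to[0,\infty)$ with $f(0)=0$, $\lim_{x\to0}f(x)=0$; $\mathcal{H}^f(A)=\lim_{\delta\to0}\inf\{\sum_nf(\operatorname{diam}C_n):A\subseteq\bigcup_nC_n,\ \operatorname{diam}C_n\le\delta\}$ and $\mathcal{N}^f=\{A\subseteq2^\omega:\mathcal{H}^f(A)=0\}$. For nondecreasing unbounded $e\in\omega^\omega$, $e^*$ is the gauge function with $e^*(0)=0$, $e^*(2^{-k})=2^{-e(k)}$ for all $k\in\omega$, linear on each interval $[2^{-k-1},2^{-k}]$ (and constant on $[1,\infty)$). For $c,h\in\omega^\omega$: $\prod c=\prod_n c(n)$ (each $c(n)=\{0,\dots,c(n)-1\}$), $S(c,h)=\prod_n[c(n)]^{\le h(n)}$ (sequences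 $\phi$ with $\phi(n)\subseteq c(n)$, $|\phi(n)|\le h(n)$), and $x\in^\infty\phi$ iff $x(n)\in\phi(n)$ for infinitely many $n$. $\mathfrak{c}^\exists_{c,h}$ is the least size of $\Phi\subseteq S(c,h)$ such that every $x\in\prod c$ satisfies $x\in^\infty\phi$ for some $\phi\in\Phi$; $\mathfrak{v}^\exists_{c,h}$ is the least size of $F\subseteq\prod c$ such that for every $\phi\in S(c,h)$ some $x\in F$ fails $x\in^\infty\phi$. $\operatorname{cov}(I)$ is the least size of a subfamily of $I$ covering $2^\omega$, $\operatorname{non}(I)$ the least size of a subset of $2^\omega$ not in $I$. *)

theory Defs
  imports "HOL-Analysis.Analysis"
begin

type_synonym cantor = "nat \<Rightarrow> bool"

definition cdist :: "cantor \<Rightarrow> cantor \<Rightarrow> real" where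
  "cdist x y = (if x = y then 0 else (1/2) ^ (LEAST n. x n \<noteq> y n))"

definition cdiam :: "cantor set \<Rightarrow> real" where
  "cdiam C = (if C = {} then 0 else Sup {cdist x y | x y. x \<in> C \<and> y \<in> C})"

definition hausdorff_delta :: "(real \<Rightarrow> real) \<Rightarrow> real \<Rightarrow> cantor set \<Rightarrow> ennreal" where
  "hausdorff_delta f \<delta> A = (INF C \<in> {C :: nat \<Rightarrow> cantor set.
        A \<subseteq> (\<Union>n. C n) \<and> (\<forall>n. cdiam (C n) \<le> \<delta>)}. (\<Sum>n. ennreal (f (cdiam (C n)))))"

text \<open>Since the delta-approximation increases as delta decreases to 0, the limit is the supremum.\<close>
definition hausdorff :: "(real \<Rightarrow> real) \<Rightarrow> cantor set \<Rightarrow> ennreal" where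
  "hausdorff f A = (SUP \<delta> \<in> {0<..}. hausdorff_delta f \<delta> A)"

definition hnull :: "(real \<Rightarrow> real) \<Rightarrow> cantor set set" where
  "hnull f = {A. hausdorff f A = 0}"

text \<open>e*(0)=0, e*(2^-k) = 2^-e(k), linear on [2^-(k+1), 2^-k], constant on [1,inf).
  For 0 < x < 1, k = floor(-log2 x) satisfies 2^-(k+1) < x <= 2^-k.\<close>
definition estar :: "(nat \<Rightarrow> nat) \<Rightarrow> real \<Rightarrow> real" where
  "estar e x = (if x \<le> 0 then 0
     else if 1 \<le> x then (1/2) ^ e 0
     else (let k = nat \<lfloor>- log 2 x\<rfloor>;
               a = (1/2) ^ (k+1); b = (1/2) ^ k
           in (1/2) ^ e (k+1) + (x - a) * ((1/2) ^ e k - (1/2) ^ e (k+1)) / (b - a)))"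

definition prodc :: "(nat \<Rightarrow> nat) \<Rightarrow> (nat \<Rightarrow> nat) set" where
  "prodc c = {x. \<forall>n. x n < c n}"

definition slalom_space :: "(nat \<Rightarrow> nat) \<Rightarrow> (nat \<Rightarrow> nat) \<Rightarrow> (nat \<Rightarrow> nat set) set" where
  "slalom_space c h = {\<phi>. \<forall>n. \<phi> n \<subseteq> {..<c n} \<and> card (\<phi> n) \<le> h n}"

definition inf_in :: "(nat \<Rightarrow> nat) \<Rightarrow> (nat \<Rightarrow> nat set) \<Rightarrow> bool" where
  "inf_in x \<phi> \<longleftrightarrow> infinite {n. x n \<in> \<phi> n}"

definition c_exists_family :: "(nat \<Rightarrow> nat) \<Rightarrow> (nat \<Rightarrow> nat) \<Rightarrow> (nat \<Rightarrow> nat set) set \<Rightarrow> bool" where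
  "c_exists_family c h \<Phi> \<longleftrightarrow> \<Phi> \<subseteq> slalom_space c h \<and> (\<forall>x\<in>prodc c. \<exists>\<phi>\<in>\<Phi>. inf_in x \<phi>)"

definition v_exists_family :: "(nat \<Rightarrow> nat) \<Rightarrow> (nat \<Rightarrow> nat) \<Rightarrow> (nat \<Rightarrow> nat) set \<Rightarrow> bool" where
  "v_exists_family c h F \<longleftrightarrow> F \<subseteq> prodc c \<and> (\<forall>\<phi>\<in>slalom_space c h. \<exists>x\<in>F. \<not> inf_in x \<phi>)"

definition cov_family :: "cantor set set \<Rightarrow> cantor set set \<Rightarrow> bool" where
  "cov_family I \<A> \<longleftrightarrow> \<A> \<subseteq> I \<and> \<Union>\<A> = UNIV"

definition non_set :: "cantor set set \<Rightarrow> cantor set \<Rightarrow> bool" where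
  "non_set I X \<longleftrightarrow> X \<notin> I"

definition card_leq :: "'a set \<Rightarrow> 'b set \<Rightarrow> bool" where
  "card_leq A B \<longleftrightarrow> (\<exists>f. inj_on f A \<and> f ` A \<subseteq> B)"

text \<open>I_n = [sum_{i<n} h i, sum_{i<=n} h i); g(k) = floor(log2 c(n)) for k in I_n.\<close>
definition interval_index :: "(nat \<Rightarrow> nat) \<Rightarrow> nat \<Rightarrow> nat" where
  "interval_index h k = (LEAST n. k < (\<Sum>i\<le>n. h i))"

definition gch :: "(nat \<Rightarrow> nat) \<Rightarrow> (nat \<Rightarrow> nat) \<Rightarrow> nat \<Rightarrow> nat" where
  "gch c h k = nat \<lfloor>log 2 (real (c (interval_index h k)))\<rfloor>"

end

theory Submission
  imports Defs
begin

definition code :: "nat \<Rightarrow> cantor \<Rightarrow> nat" where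
  "code L z = (\<Sum>i<L. if z i then 2^i else 0)"

lemma code_less: "code L z < 2^L"
proof (induction L)
  case 0 then show ?case by (simp add: code_def)
next
  case (Suc L)
  have "code (Suc L) z = code L z + (if z L then 2^L else 0)" by (simp add: code_def)
  then show ?case using Suc by auto
qed

lemma code_inj: "code L y = code L z \<Longrightarrow> i < L \<Longrightarrow> y i = z i"
proof (induction L)
  case 0 then show ?case by simp
next
  case (Suc L)
  have y: "code (Suc L) y = code L y + (if y L then 2^L else 0)" by (simp add: code_def)
  have z: "code (Suc L) z = code L z + (if z L then 2^L else 0)" by (simp add: code_def)
  have a: "code L y < 2^L" "code L z < 2^L" by (rule code_less)+
  have yz: "y L = z L" using Suc.prems(1) y z a by (auto split: if_splits)
  then have "code L y = code L z" using Suc.prems(1) y z by simp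
  then show ?case using Suc yz by (cases "i = L") auto
qed

lemma code_upd: "code L (z(L := b)) = code L z"
  unfolding code_def by (rule sum.cong) auto

lemma cdist_le: assumes "\<forall>i<m. x i = y i" shows "cdist x y \<le> (1/2)^m"
proof (cases "x = y")
  case True then show ?thesis by (simp add: cdist_def)
next
  case False
  then obtain n where "x n \<noteq> y n" by auto
  then have "x (LEAST n. x n \<noteq> y n) \<noteq> y (LEAST n. x n \<noteq> y n)" by (rule LeastI)
  then have "m \<le> (LEAST n. x n \<noteq> y n)" using assms not_less by blast
  then show ?thesis using False by (simp add: cdist_def power_decreasing)
qed

lemma cdist_flip: "cdist x (x(m := \<not> x m)) = (1/2)^m"
proof -
  have "(LEAST n. x n \<noteq> (x(m := \<not> x m)) n) = m"
    proof (rule Least_equality)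
    fix y assume "x y \<noteq> (x(m := \<not> x m)) y"
    then show "m \<le> y" by (cases "y = m") auto
  qed simp
  moreover have "x \<noteq> x(m := \<not> x m)"
  proof
    assume "x = x(m := \<not> x m)"
    then have "x m = (x(m := \<not> x m)) m" by (rule fun_cong)
    then show False by simp
  qed
  ultimately show ?thesis by (simp add: cdist_def)
qed

lemma cdiam_cyl:
  assumes ne: "x0 \<in> A" and agree: "\<forall>x\<in>A. \<forall>y\<in>A. \<forall>i<m. x i = y i"
    and flip: "\<forall>x\<in>A. x(m := \<not> x m) \<in> A"
  shows "cdiam A = (1/2)^m"
proof -
  have "Sup {cdist x y | x y. x \<in> A \<and> y \<in> A} = (1/2)^m"
  proof (rule cSup_eq_maximum)
    have "x0(m := \<not> x0 m) \<in> A" using ne flip by blast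
    then show "(1/2)^m \<in> {cdist x y | x y. x \<in> A \<and> y \<in> A}"
      using ne cdist_flip[of x0 m] by (intro CollectI exI[of _ x0] exI[of _ "x0(m := \<not> x0 m)"]) simp
  next
    fix z assume "z \<in> {cdist x y | x y. x \<in> A \<and> y \<in> A}"
    then obtain x y where z: "z = cdist x y" and xy: "x \<in> A" "y \<in> A" by blast
    have "\<forall>i<m. x i = y i" using agree xy by blast
    then show "z \<le> (1/2)^m" unfolding z by (rule cdist_le)
  qed
  moreover have "A \<noteq> {}" using ne by blast
  ultimately show ?thesis unfolding cdiam_def by simp
qed

lemma estar_at: "0 < (x::real) \<Longrightarrow> x < 1 \<Longrightarrow> nat \<lfloor>- log 2 x\<rfloor> = k \<Longrightarrow>
  estar e x = (1/2)^e (k+1) + (x - (1/2)^(k+1)) * ((1/2)^e k - (1/2)^e (k+1)) / ((1/2)^k - (1/2)^(k+1))"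
  unfolding estar_def Let_def by simp

lemma estar_pow: "estar e ((1/2)^m) = (1/2)^(e m)"
proof (cases m)
  case 0 then show ?thesis by (simp add: estar_def)
next
  case (Suc m')
  have lt: "(1/2::real)^m < 1" using Suc power_strict_decreasing[of 0 m "1/2::real"] by simp
  have lg: "log 2 ((1/2::real)^m) = - real m"
    by (simp add: log_nat_power log_divide)
  have k: "nat \<lfloor>- log 2 ((1/2::real)^m)\<rfloor> = m" using lg by simp
  have ne: "(1/2::real)^m - (1/2)^(m+1) \<noteq> 0" by simp
  have "estar e ((1/2)^m) = (1/2)^e (m+1) + ((1/2::real)^m - (1/2)^(m+1)) * ((1/2)^e m - (1/2)^e (m+1)) / ((1/2)^m - (1/2)^(m+1))"
    by (rule estar_at[OF _ lt k]) simp
  also have "\<dots> = (1/2)^(e m)" using ne by simp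
  finally show ?thesis .
qed

lemma estar_zero: "estar e 0 = 0" by (simp add: estar_def)

definition Gn :: "(nat \<Rightarrow> nat) \<Rightarrow> nat \<Rightarrow> nat" where
  "Gn c n = nat \<lfloor>log 2 (real (c n))\<rfloor>"
definition Fz :: "(nat \<Rightarrow> nat) \<Rightarrow> cantor \<Rightarrow> nat \<Rightarrow> nat" where
  "Fz c z = (\<lambda>n. code (Gn c n) z)"
definition start :: "(nat \<Rightarrow> nat) \<Rightarrow> nat \<Rightarrow> nat" where
  "start h n = (\<Sum>i<n. h i)"
definition Gset :: "(nat \<Rightarrow> nat) \<Rightarrow> (nat \<Rightarrow> nat set) \<Rightarrow> cantor set" where
  "Gset c \<phi> = {z. inf_in (Fz c z) \<phi>}"

lemma gch_Gn: "gch c h k = Gn c (interval_index h k)"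
  by (simp add: gch_def Gn_def)

lemma pow_Gn: assumes "1 \<le> c n" shows "2 ^ Gn c n \<le> c n"
proof -
  define r where "r = log 2 (real (c n))"
  have r0: "0 \<le> r" using assms by (simp add: r_def)
  have fl0: "0 \<le> \<lfloor>r\<rfloor>" using r0 by simp
  have "real (2 ^ Gn c n) = 2 powr real (nat \<lfloor>r\<rfloor>)"
    by (simp add: Gn_def r_def powr_realpow)
  also have "\<dots> = 2 powr real_of_int \<lfloor>r\<rfloor>" using fl0 by simp
  also have "\<dots> \<le> 2 powr r" by (rule powr_mono) auto
  also have "\<dots> = real (c n)" using assms by (simp add: r_def)
  finally show ?thesis by linarith
qed

lemma Fz_prodc: assumes "\<forall>n. 1 \<le> c n" shows "Fz c z \<in> prodc c"
  unfolding prodc_def Fz_def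
  using code_less pow_Gn assms less_le_trans by blast

lemma interval_index_start: assumes "t < h n" shows "interval_index h (start h n + t) = n"
  unfolding interval_index_def
proof (rule Least_equality)
  show "start h n + t < (\<Sum>i\<le>n. h i)" using assms
    by (simp add: start_def lessThan_Suc_atMost[symmetric])
next
  fix m assume "start h n + t < (\<Sum>i\<le>m. h i)"
  moreover have "m < n \<Longrightarrow> (\<Sum>i\<le>m. h i) \<le> start h n"
    unfolding start_def by (rule sum_mono2) auto
  ultimately show "n \<le> m" by (meson le_add1 less_le_trans not_le)
qed

lemma start_mono: "m \<le> n \<Longrightarrow> start h m \<le> start h n"
  unfolding start_def by (rule sum_mono2) auto

lemma start_unbounded: assumes "\<forall>k. \<exists>n. k < (\<Sum>i\<le>n. h i)" shows "\<exists>N. K \<le> start h N"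
proof -
  obtain n where "K < (\<Sum>i\<le>n. h i)" using assms by blast
  then have "K \<le> start h (Suc n)" by (simp add: start_def lessThan_Suc_atMost)
  then show ?thesis by blast
qed

lemma cyl_diam: "{y. code L y = j} = {} \<or> cdiam {y. code L y = j} = (1/2)^L"
proof (cases "{y. code L y = j} = {}")
  case False
  then obtain x0 where x0: "x0 \<in> {y. code L y = j}" by blast
  have "cdiam {y. code L y = j} = (1/2)^L"
  proof (rule cdiam_cyl[OF x0])
    show "\<forall>x\<in>{y. code L y = j}. \<forall>y\<in>{y. code L y = j}. \<forall>i<L. x i = y i"
      using code_inj by force
    show "\<forall>x\<in>{y. code L y = j}. x(L := \<not> x L) \<in> {y. code L y = j}"
      by (simp add: code_upd)
  qed
  then show ?thesis by blast
qed simp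

lemma gbound:
  assumes growth: "\<forall>n\<ge>1. real (e (gch c h n)) \<ge> 2 * log 2 (real n)" and k: "1 \<le> k"
  shows "(1/2::real)^(e (gch c h k)) \<le> inverse (real k ^ 2)"
proof -
  define E where "E = e (gch c h k)"
  have E: "real E \<ge> 2 * log 2 (real k)" using growth k by (simp add: E_def)
  have kp: "0 < real k" using k by simp
  have "real k ^ 2 = 2 powr (log 2 (real k)) * 2 powr (log 2 (real k))"
    using kp by (simp add: power2_eq_square)
  also have "\<dots> = 2 powr (2 * log 2 (real k))" by (simp add: powr_add[symmetric])
  also have "\<dots> \<le> 2 powr real E" using E by (rule powr_mono) simp
  also have "\<dots> = 2 ^ E" by (simp add: powr_realpow)
  finally have "real k ^ 2 \<le> 2 ^ E" .
  then have "inverse ((2::real) ^ E) \<le> inverse (real k ^ 2)"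
    using kp by (intro le_imp_inverse_le) auto
  then show ?thesis by (simp add: E_def power_one_over inverse_eq_divide)
qed

lemma gdiam:
  assumes e_mono: "mono e" and growth: "\<forall>n\<ge>1. real (e (gch c h n)) \<ge> 2 * log 2 (real n)"
    and k: "2 ^ e M + 2 \<le> k"
  shows "M \<le> gch c h k"
proof (rule ccontr)
  assume "\<not> M \<le> gch c h k"
  then have "e (gch c h k) \<le> e M" using e_mono by (simp add: monoD)
  moreover have "real (e (gch c h k)) \<ge> 2 * log 2 (real k)" using growth k by simp
  moreover have "log 2 (real k) > real (e M)"
  proof -
    have "(2::real) powr real (e M) < real k" using k by (simp add: powr_realpow)
    then show ?thesis using k by (simp add: less_log_iff)
  qed
  moreover have "log 2 (real k) > 0" using k by simp
  ultimately show False by linarith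
qed

lemma hd_small:
  fixes e c h :: "nat \<Rightarrow> nat"
  assumes e_mono: "mono e"
    and c_pos: "\<forall>n. 1 \<le> c n"
    and partition: "\<forall>k. \<exists>n. k < (\<Sum>i\<le>n. h i)"
    and growth: "\<forall>n\<ge>1. real (e (gch c h n)) \<ge> 2 * log 2 (real n)"
    and phi: "\<phi> \<in> slalom_space c h" and A: "A \<subseteq> Gset c \<phi>"
    and dpos: "0 < \<delta>" and epos: "0 < \<epsilon>"
  shows "hausdorff_delta (estar e) \<delta> A \<le> ennreal \<epsilon>"
proof -
  obtain M where M: "(1/2::real)^M < \<delta>" using real_arch_pow_inv[OF dpos, of "1/2"] by auto
  define a :: "nat \<Rightarrow> real" where "a k = inverse (real k ^ 2)" for k
  have suma: "summable a" unfolding a_def using inverse_power_summable[of 2] by simp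
  obtain K2 where K2: "\<forall>n\<ge>K2. norm (\<Sum>i. a (i + n)) < \<epsilon>"
    using suminf_exist_split[OF epos suma] by blast
  define K where "K = max K2 (2 ^ e M + 2)"
  define cell where "cell k = (let n = interval_index h k; t = k - start h n in
       if t < card (\<phi> n) then {y. code (Gn c n) y = sorted_list_of_set (\<phi> n) ! t} else {})" for k
  define C where "C k = (if K \<le> k then cell k else {})" for k
  have fin: "finite (\<phi> n)" and cardle: "card (\<phi> n) \<le> h n" for n
    using phi unfolding slalom_space_def by (auto intro: finite_subset)
  have Cshape: "C k = {} \<or> (K \<le> k \<and> cdiam (C k) = (1/2)^(gch c h k))" for k
  proof (cases "K \<le> k")
    case True
    show ?thesis
    proof (cases "k - start h (interval_index h k) < card (\<phi> (interval_index h k))")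
      case True2: True
      then have "C k = {y. code (Gn c (interval_index h k)) y =
          sorted_list_of_set (\<phi> (interval_index h k)) ! (k - start h (interval_index h k))}"
        using True by (simp add: C_def cell_def Let_def)
      then show ?thesis using cyl_diam True by (simp add: gch_Gn)
    next
      case False
      then show ?thesis by (simp add: C_def cell_def Let_def)
    qed
  qed (simp add: C_def)
  have cover: "A \<subseteq> (\<Union>k. C k)"
  proof
    fix z assume "z \<in> A"
    then have inf: "infinite {n. Fz c z n \<in> \<phi> n}" using A by (auto simp: Gset_def inf_in_def)
    obtain N where N: "K \<le> start h N" using start_unbounded[OF partition] by blast
    obtain n where n: "n \<in> {n. Fz c z n \<in> \<phi> n}" "N \<le> n"
      using inf unfolding infinite_nat_iff_unbounded_le by blast
    have Kn: "K \<le> start h n" using N start_mono[OF n(2), of h] by simp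
    define j where "j = code (Gn c n) z"
    have j: "j \<in> set (sorted_list_of_set (\<phi> n))" using n(1) fin by (simp add: Fz_def j_def)
    then obtain t where t: "t < length (sorted_list_of_set (\<phi> n))" "sorted_list_of_set (\<phi> n) ! t = j"
      by (metis in_set_conv_nth)
    have tc: "t < card (\<phi> n)" using t(1) by simp
    then have th: "t < h n" using cardle[of n] by simp
    define k where "k = start h n + t"
    have ik: "interval_index h k = n" unfolding k_def by (rule interval_index_start[of t h n, OF th])
    have "z \<in> C k" using Kn tc t(2) ik by (simp add: C_def cell_def k_def Let_def j_def)
    then show "z \<in> (\<Union>k. C k)" by blast
  qed
  have diam: "cdiam (C k) \<le> \<delta>" for k
  proof (cases "C k = {}")
    case True then show ?thesis using dpos by (simp add: cdiam_def)
  next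
    case False
    then have k: "K \<le> k" and d: "cdiam (C k) = (1/2)^(gch c h k)" using Cshape[of k] by auto
    have "M \<le> gch c h k" using gdiam[OF e_mono growth] k by (simp add: K_def)
    then have pd: "(1/2::real)^(gch c h k) \<le> (1/2)^M" by (simp add: power_decreasing)
    show ?thesis unfolding d using pd M by linarith
  qed
  define b where "b k = (if K \<le> k then a k else 0)" for k
  have b0: "0 \<le> b k" for k by (simp add: b_def a_def)
  have sumb: "summable b"
    by (rule summable_comparison_test[OF _ suma]) (auto simp: b_def a_def)
  have termle: "ennreal (estar e (cdiam (C k))) \<le> ennreal (b k)" for k
  proof (cases "C k = {}")
    case True then show ?thesis by (simp add: cdiam_def estar_zero)
  next
    case False
    then have k: "K \<le> k" and d: "cdiam (C k) = (1/2)^(gch c h k)" using Cshape[of k] by auto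
    have "1 \<le> k" using k by (simp add: K_def)
    then have ga: "(1/2::real)^(e (gch c h k)) \<le> a k" unfolding a_def by (rule gbound[OF growth])
    have "estar e (cdiam (C k)) = (1/2)^(e (gch c h k))" using d by (simp add: estar_pow)
    moreover have "b k = a k" using k by (simp add: b_def)
    ultimately show ?thesis using ga by (simp add: ennreal_leI)
  qed
  have "(\<Sum>k. ennreal (estar e (cdiam (C k)))) \<le> (\<Sum>k. ennreal (b k))"
    by (rule suminf_le[OF termle summableI summableI])
  also have "\<dots> = ennreal (\<Sum>k. b k)" by (rule suminf_ennreal2[OF b0 sumb])
  also have "(\<Sum>k. b k) = (\<Sum>i. a (i + K))"
  proof -
    have "(\<Sum>k. b k) = (\<Sum>i. b (i + K)) + (\<Sum>i<K. b i)" by (rule suminf_split_initial_segment[OF sumb])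
    also have "(\<Sum>i<K. b i) = 0" by (simp add: b_def)
    also have "(\<lambda>i. b (i + K)) = (\<lambda>i. a (i + K))" by (simp add: b_def)
    finally show ?thesis by simp
  qed
  also have "(\<Sum>i. a (i + K)) \<le> \<epsilon>" using K2[rule_format, of K] by (simp add: K_def)
  finally have S: "(\<Sum>k. ennreal (estar e (cdiam (C k)))) \<le> ennreal \<epsilon>" using ennreal_leI by blast
  have "hausdorff_delta (estar e) \<delta> A \<le> (\<Sum>k. ennreal (estar e (cdiam (C k))))"
    unfolding hausdorff_delta_def using cover diam by (intro INF_lower) auto
  then show ?thesis using S by (rule order_trans)
qed

lemma Gset_null:
  fixes e c h :: "nat \<Rightarrow> nat"
  assumes e_mono: "mono e"
    and c_pos: "\<forall>n. 1 \<le> c n"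
    and partition: "\<forall>k. \<exists>n. k < (\<Sum>i\<le>n. h i)"
    and growth: "\<forall>n\<ge>1. real (e (gch c h n)) \<ge> 2 * log 2 (real n)"
    and phi: "\<phi> \<in> slalom_space c h" and A: "A \<subseteq> Gset c \<phi>"
  shows "A \<in> hnull (estar e)"
proof -
  have "hausdorff_delta (estar e) \<delta> A = 0" if d: "0 < \<delta>" for \<delta>
  proof -
    have "hausdorff_delta (estar e) \<delta> A \<le> 0"
    proof (rule ennreal_le_epsilon)
      fix \<epsilon> :: real assume "0 < \<epsilon>"
      then show "hausdorff_delta (estar e) \<delta> A \<le> 0 + ennreal \<epsilon>"
        using hd_small[OF e_mono c_pos partition growth phi A d] by simp
    qed
    then show ?thesis by simp
  qed
  then show ?thesis unfolding hnull_def hausdorff_def by simp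
qed

theorem lemma3p4:
  fixes e c h :: "nat \<Rightarrow> nat"
  assumes e_mono: "mono e"
    and e_unbounded: "\<forall>m. \<exists>k. m \<le> e k"
    and c_pos: "\<forall>n. 1 \<le> c n"
    and partition: "\<forall>k. \<exists>n. k < (\<Sum>i\<le>n. h i)"
    and growth: "\<forall>n\<ge>1. real (e (gch c h n)) \<ge> 2 * log 2 (real n)"
  shows "(\<forall>X. non_set (hnull (estar e)) X \<longrightarrow>
            (\<exists>F. v_exists_family c h F \<and> card_leq F X))
       \<and> (\<forall>\<Phi>. c_exists_family c h \<Phi> \<longrightarrow>
            (\<exists>\<A>. cov_family (hnull (estar e)) \<A> \<and> card_leq \<A> \<Phi>))"
proof (intro conjI allI impI)
  fix X assume X: "non_set (hnull (estar e)) X"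
  define F where "F = Fz c ` X"
  have "v_exists_family c h F"
    unfolding v_exists_family_def
  proof (intro conjI ballI)
    show "F \<subseteq> prodc c" using Fz_prodc[OF c_pos] by (auto simp: F_def)
  next
    fix \<phi> assume phi: "\<phi> \<in> slalom_space c h"
    show "\<exists>x\<in>F. \<not> inf_in x \<phi>"
    proof (rule ccontr)
      assume "\<not> (\<exists>x\<in>F. \<not> inf_in x \<phi>)"
      then have "X \<subseteq> Gset c \<phi>" by (auto simp: F_def Gset_def)
      then have "X \<in> hnull (estar e)" by (rule Gset_null[OF e_mono c_pos partition growth phi])
      then show False using X by (simp add: non_set_def)
    qed
  qed
  moreover have "card_leq F X" unfolding card_leq_def F_def
    by (intro exI[of _ "inv_into X (Fz c)"]) (auto intro: inj_on_inv_into inv_into_into)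
  ultimately show "\<exists>F. v_exists_family c h F \<and> card_leq F X" by blast
next
  fix \<Phi> assume P: "c_exists_family c h \<Phi>"
  define AA where "AA = Gset c ` \<Phi>"
  have "cov_family (hnull (estar e)) AA"
    unfolding cov_family_def
  proof
    show "AA \<subseteq> hnull (estar e)" using P Gset_null[OF e_mono c_pos partition growth]
      by (auto simp: AA_def c_exists_family_def)
    show "\<Union> AA = UNIV"
    proof (rule set_eqI, rule iffI)
      fix z :: cantor
      obtain \<phi> where "\<phi> \<in> \<Phi>" "inf_in (Fz c z) \<phi>"
        using P Fz_prodc[OF c_pos, of z] by (auto simp: c_exists_family_def)
      then show "z \<in> \<Union> AA" by (auto simp: AA_def Gset_def)
    qed simp
  qed
  moreover have "card_leq AA \<Phi>" unfolding card_leq_def AA_def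
    by (intro exI[of _ "inv_into \<Phi> (Gset c)"]) (auto intro: inj_on_inv_into inv_into_into)
  ultimately show "\<exists>\<A>. cov_family (hnull (estar e)) \<A> \<and> card_leq \<A> \<Phi>" by blast
qed

end
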